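(* Assume Schanuel's conjecture $(S)$. Let $\alpha,\beta,\gamma$ be nonzero complex numbers with $\alpha\neq 1$ and $\beta^{\gamma}\neq 1$. Suppose that at least one of $\alpha$ and $\beta^{\gamma}$ is irrational, and at least one of them is algebraic. If $\beta^{\gamma\alpha}$ is algebraic, then $\alpha^{\beta^{\gamma}}$ is transcendental.
   Context: Schanuel's conjecture $(S)$: if $\alpha_1,\dots,\alpha_n\in\mathbb{C}$ are linearly independent over $\mathbb{Q}$, then the transcendence degree of $\mathbb{Q}(\alpha_1,\dots,\alpha_n,e^{\alpha_1},\dots,e^{\alpha_n})$ over $\mathbb{Q}$ is at least $n$. Powers: fix a determination $\log\beta$ and $\log\alpha$; $\beta^{\gamma}:=e^{\gamma\log\beta}$, $\beta^{\gamma\alpha}:=e^{\gamma\alpha\log\beta}$ (i.e. $(\beta^\gamma)^\alpha$ computed with $\log(\beta^\gamma)=\gamma\log\beta$), and $\alpha^{\beta^{\gamma}}:=e^{\beta^{\gamma}\log\alpha}$. *)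

theory Defs
  imports "HOL-Analysis.Analysis" "HOL-Computational_Algebra.Polynomial"
begin

definition Q_lin_indep :: "nat \<Rightarrow> (nat \<Rightarrow> complex) \<Rightarrow> bool" where
  "Q_lin_indep n a \<longleftrightarrow>
     (\<forall>q :: nat \<Rightarrow> rat. (\<Sum>i<n. of_rat (q i) * a i) = 0 \<longrightarrow> (\<forall>i<n. q i = 0))"

text \<open>A polynomial is given by a finite set M of monomials (exponent functions
  supported in T) and rational coefficients c.\<close>
definition Q_alg_indep :: "complex set \<Rightarrow> bool" where
  "Q_alg_indep T \<longleftrightarrow> finite T \<and>
     (\<forall>(M :: (complex \<Rightarrow> nat) set) (c :: (complex \<Rightarrow> nat) \<Rightarrow> rat).
        finite M \<longrightarrow> (\<forall>m\<in>M. \<forall>x. m x \<noteq> 0 \<longrightarrow> x \<in> T) \<longrightarrow>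
        (\<Sum>m\<in>M. of_rat (c m) * (\<Prod>x\<in>T. x ^ m x)) = 0 \<longrightarrow> (\<forall>m\<in>M. c m = 0))"

definition trdeg_Q_ge :: "complex set \<Rightarrow> nat \<Rightarrow> bool" where
  "trdeg_Q_ge S n \<longleftrightarrow> (\<exists>T\<subseteq>S. card T = n \<and> Q_alg_indep T)"

definition Schanuel :: bool where
  "Schanuel \<longleftrightarrow>
     (\<forall>(n::nat) (a :: nat \<Rightarrow> complex). Q_lin_indep n a \<longrightarrow>
        trdeg_Q_ge (a ` {..<n} \<union> (\<lambda>i. exp (a i)) ` {..<n}) n)"

end

theory Submission
  imports Defs
begin

interpretation QV: vector_space "\<lambda>(r::rat) (z::complex). of_rat r * z"
  by unfold_locales (simp_all add: algebra_simps of_rat_add of_rat_mult)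

lemma span_scale': "x \<in> QV.span S \<Longrightarrow> of_rat c * x \<in> QV.span S"
  using QV.span_scale[of x S c] by simp

lemma alg_span:
  fixes y :: complex
  assumes F: "finite F" and sp: "\<And>m. y ^ m \<in> QV.span F"
  shows "algebraic y"
proof (cases "inj_on (\<lambda>m. y ^ m) {..card F}")
  case True
  define P where "P = (\<lambda>m. y ^ m) ` {..card F}"
  have cP: "card P = Suc (card F)" using True by (simp add: P_def card_image)
  have fP: "finite P" by (simp add: P_def)
  have PF: "P \<subseteq> QV.span F" using sp by (auto simp: P_def)
  have "QV.dependent P"
  proof (rule ccontr)
    assume "\<not> QV.dependent P"
    from QV.independent_span_bound[OF F this PF] cP show False by simp
  qed
  then obtain u where u: "\<exists>v\<in>P. u v \<noteq> 0" "(\<Sum>v\<in>P. of_rat (u v) * v) = 0"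
    using QV.dependent_finite[OF fP] by auto
  define p where "p = (\<Sum>m\<le>card F. monom (of_rat (u (y ^ m)) :: complex) m)"
  have cp: "coeff p k = (if k \<le> card F then of_rat (u (y ^ k)) else 0)" for k
    by (simp add: p_def coeff_sum coeff_monom)
  have "poly p y = (\<Sum>m\<le>card F. of_rat (u (y ^ m)) * y ^ m)"
    by (simp add: p_def poly_sum poly_monom)
  also have "\<dots> = (\<Sum>v\<in>P. of_rat (u v) * v)"
    unfolding P_def by (subst sum.reindex[OF True]) simp
  finally have root: "poly p y = 0" using u by simp
  from u obtain k where k: "k \<le> card F" "u (y ^ k) \<noteq> 0" by (auto simp: P_def)
  have "p \<noteq> 0"
  proof
    assume "p = 0" hence "coeff p k = 0" by simp
    with k cp show False by simp
  qed
  moreover have "\<forall>i. coeff p i \<in> \<rat>" by (simp add: cp)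
  ultimately show ?thesis using root by (auto simp: algebraic_altdef)
next
  case False
  then obtain i j where ij: "i \<noteq> j" "y ^ i = y ^ j" unfolding inj_on_def by auto
  define a b where "a = min i j" and "b = max i j"
  have ab: "a < b" "y ^ a = y ^ b" using ij by (auto simp: a_def b_def min_def max_def)
  define p where "p = monom (1::complex) b - monom 1 a"
  have "coeff p b = 1" using ab by (simp add: p_def coeff_monom)
  hence "p \<noteq> 0" by auto
  moreover have "poly p y = 0" using ab by (simp add: p_def poly_monom)
  moreover have "\<forall>i. coeff p i \<in> \<rat>" by (simp add: p_def coeff_monom)
  ultimately show ?thesis by (auto simp: algebraic_altdef)
qed

lemma span_mult:
  fixes A B :: "complex set"
  assumes A: "finite A" and B: "finite B" and u: "u \<in> QV.span A" and v: "v \<in> QV.span B"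
  shows "u * v \<in> QV.span ((\<lambda>(a,b). a * b) ` (A \<times> B))"
proof -
  obtain r where r: "u = (\<Sum>a\<in>A. of_rat (r a) * a)" using u QV.span_finite[OF A] by auto
  obtain s where s: "v = (\<Sum>b\<in>B. of_rat (s b) * b)" using v QV.span_finite[OF B] by auto
  have "u * v = (\<Sum>a\<in>A. \<Sum>b\<in>B. of_rat (r a * s b) * (a * b))"
    by (simp add: r s sum_product of_rat_mult algebra_simps)
  also have "\<dots> \<in> QV.span ((\<lambda>(a,b). a * b) ` (A \<times> B))"
    by (intro QV.span_sum QV.span_scale[where c = "r a * s b" for a b, simplified] QV.span_base)
       (auto intro: QV.span_scale QV.span_base)
  finally show ?thesis .
qed

lemma alg_powers_span:
  fixes a :: complex
  assumes "algebraic a"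
  shows "\<exists>F. finite F \<and> (\<forall>m. a ^ m \<in> QV.span F)"
proof -
  obtain p where p: "\<forall>i. coeff p i \<in> \<rat>" "p \<noteq> 0" "poly p a = 0"
    using assms by (auto simp: algebraic_altdef)
  have "\<forall>i. \<exists>r. coeff p i = of_rat r" using p(1) by (auto elim: Rats_cases)
  then obtain \<rho> where \<rho>: "\<And>i. coeff p i = of_rat (\<rho> i)" by metis
  define d where "d = degree p"
  have d0: "d > 0"
  proof (rule ccontr)
    assume "\<not> d > 0" hence "degree p = 0" by (simp add: d_def)
    then obtain c where "p = [:c:]" by (metis degree_eq_zeroE)
    with p show False by simp
  qed
  have lc: "\<rho> d \<noteq> 0" using p(2) \<rho>[of d] by (metis d_def leading_coeff_0_iff of_rat_0)
  have eq0: "(\<Sum>k<d. coeff p k * a ^ k) + coeff p d * a ^ d = 0"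
    using p(3) by (simp add: poly_altdef d_def lessThan_Suc_atMost[symmetric])
  define F where "F = (\<lambda>k. a ^ k) ` {..<d}"
  have "a ^ m \<in> QV.span F" for m
  proof (induction m rule: less_induct)
    case (less m)
    show ?case
    proof (cases "m < d")
      case True thus ?thesis by (intro QV.span_base) (auto simp: F_def)
    next
      case False
      have lc': "coeff p d \<noteq> 0" using lc \<rho>[of d] by simp
      have e1: "coeff p d * a ^ d = - (\<Sum>k<d. coeff p k * a ^ k)"
        using eq0 by (simp add: eq_neg_iff_add_eq_0 add.commute)
      have "a ^ d = (- (\<Sum>k<d. coeff p k * a ^ k)) / coeff p d"
        using e1 lc' by (simp add: field_simps)
      also have "\<dots> = (\<Sum>k<d. of_rat (- \<rho> k / \<rho> d) * a ^ k)"
        by (simp add: \<rho> sum_divide_distrib of_rat_divide of_rat_minus flip: sum_negf)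
      finally have ad: "a ^ d = (\<Sum>k<d. of_rat (- \<rho> k / \<rho> d) * a ^ k)" .
      have "a ^ m = a ^ (m - d) * a ^ d" using False by (simp add: power_add[symmetric])
      also have "\<dots> = (\<Sum>k<d. of_rat (- \<rho> k / \<rho> d) * a ^ (m - d + k))"
        by (simp add: ad sum_distrib_left power_add algebra_simps)
      also have "\<dots> \<in> QV.span F"
        using False d0
        by (intro QV.span_sum span_scale' less) auto
      finally show ?thesis .
    qed
  qed
  thus ?thesis by (auto simp: F_def)
qed

lemma alg_mult:
  fixes a b :: complex
  assumes "algebraic a" "algebraic b"
  shows "algebraic (a * b)"
proof -
  obtain A where A: "finite A" "\<And>m. a ^ m \<in> QV.span A" using alg_powers_span[OF assms(1)] by auto
  obtain B where B: "finite B" "\<And>m. b ^ m \<in> QV.span B" using alg_powers_span[OF assms(2)] by auto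
  show ?thesis
    by (rule alg_span[of "(\<lambda>(a,b). a * b) ` (A \<times> B)"])
       (use A B span_mult in \<open>auto simp: power_mult_distrib\<close>)
qed

lemma alg_add:
  fixes a b :: complex
  assumes "algebraic a" "algebraic b"
  shows "algebraic (a + b)"
proof -
  obtain A where A: "finite A" "\<And>m. a ^ m \<in> QV.span A" using alg_powers_span[OF assms(1)] by auto
  obtain B where B: "finite B" "\<And>m. b ^ m \<in> QV.span B" using alg_powers_span[OF assms(2)] by auto
  have "(a + b) ^ m \<in> QV.span ((\<lambda>(a,b). a * b) ` (A \<times> B))" for m
  proof -
    have "(a + b) ^ m = (\<Sum>k\<le>m. of_rat (of_nat (m choose k)) * (a ^ k * b ^ (m - k)))"
      by (simp add: binomial_ring mult.assoc)
    also have "\<dots> \<in> QV.span ((\<lambda>(a,b). a * b) ` (A \<times> B))"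
      by (intro QV.span_sum span_scale' span_mult A B)
    finally show ?thesis .
  qed
  thus ?thesis by (intro alg_span[of "(\<lambda>(a,b). a * b) ` (A \<times> B)"]) (use A B in auto)
qed

lemma alg_root:
  fixes y :: complex
  assumes "algebraic (y ^ n)" "n > 0"
  shows "algebraic y"
proof -
  obtain A where A: "finite A" "\<And>m. (y ^ n) ^ m \<in> QV.span A" using alg_powers_span[OF assms(1)] by auto
  define Y where "Y = (\<lambda>j. y ^ j) ` {..<n}"
  have "y ^ m \<in> QV.span ((\<lambda>(a,b). a * b) ` (Y \<times> A))" for m
  proof -
    have "y ^ m = y ^ (m mod n) * (y ^ n) ^ (m div n)"
      by (metis power_add power_mult mult.commute mod_div_mult_eq)
    also have "\<dots> \<in> QV.span ((\<lambda>(a,b). a * b) ` (Y \<times> A))"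
      by (intro span_mult A QV.span_base) (use assms(2) in \<open>auto simp: Y_def\<close>)
    finally show ?thesis .
  qed
  thus ?thesis by (intro alg_span[of "(\<lambda>(a,b). a * b) ` (Y \<times> A)"]) (use A in \<open>auto simp: Y_def\<close>)
qed

lemma alg_rat: "algebraic (of_rat r :: complex)"
  by (rule algebraicI'[of "[:- of_rat r, 1:]"]) (auto simp: coeff_pCons split: nat.splits)

lemma alg_rats: "(c::complex) \<in> \<rat> \<Longrightarrow> algebraic c"
  by (auto elim: Rats_cases intro: alg_rat)

lemma alg_pow: "algebraic (a::complex) \<Longrightarrow> algebraic (a ^ n)"
  by (induction n) (auto intro: alg_mult)

lemma alg_divide: "algebraic (a::complex) \<Longrightarrow> algebraic b \<Longrightarrow> algebraic (a / b)"
  by (simp add: divide_inverse alg_mult algebraic_inverse)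

lemma alg_diff: "algebraic (a::complex) \<Longrightarrow> algebraic b \<Longrightarrow> algebraic (a - b)"
  using alg_add[of a "-b"] by (simp add: algebraic_minus)

lemma alg_exp_int: "algebraic (exp (z::complex)) \<Longrightarrow> algebraic (exp (of_int n * z))"
proof (cases "n \<ge> 0")
  case True
  assume a: "algebraic (exp z)"
  have "exp (of_int n * z) = exp z ^ nat n"
    using True exp_of_nat_mult[of "nat n" z] by simp
  thus ?thesis using a alg_pow by simp
next
  case False
  assume a: "algebraic (exp z)"
  have "exp (of_int n * z) = inverse (exp z ^ nat (- n))"
  proof -
    have "exp (of_int n * z) = inverse (exp (- (of_int n * z)))"
      by (simp add: exp_minus)
    also have "- (of_int n * z) = of_nat (nat (-n)) * z" using False by simp
    finally show ?thesis by (simp only: exp_of_nat_mult)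
  qed
  thus ?thesis using a alg_pow by (simp add: algebraic_inverse)
qed

lemma alg_exp_rat: "algebraic (exp (z::complex)) \<Longrightarrow> algebraic (exp (of_rat r * z))"
proof -
  assume a: "algebraic (exp z)"
  obtain n d where nd: "quotient_of r = (n, d)" by (cases "quotient_of r")
  have d: "d > 0" using quotient_of_denom_pos[OF nd] .
  have r: "r = of_int n / of_int d" using quotient_of_div[OF nd] .
  have "exp (of_rat r * z) ^ nat d = exp (of_nat (nat d) * (of_rat r * z))"
    by (simp add: exp_of_nat_mult)
  also have "of_nat (nat d) * (of_rat r * z) = of_int n * z"
    using d by (simp add: r of_rat_divide)
  finally have "algebraic (exp (of_rat r * z) ^ nat d)" using alg_exp_int[OF a] by simp
  thus ?thesis by (rule alg_root) (use d in simp)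
qed

lemma exp_rel3:
  fixes z0 z1 z2 :: complex
  assumes "of_rat q0 * z0 + of_rat q1 * z1 + of_rat q2 * z2 = 0" "q0 \<noteq> 0"
    and "algebraic (exp z1)" "algebraic (exp z2)"
  shows "algebraic (exp z0)"
proof -
  have "z0 = of_rat (- q1 / q0) * z1 + of_rat (- q2 / q0) * z2"
    using assms(1,2) by (simp add: of_rat_divide of_rat_minus field_simps eq_neg_iff_add_eq_0)
  hence "exp z0 = exp (of_rat (- q1 / q0) * z1) * exp (of_rat (- q2 / q0) * z2)"
    by (simp only: exp_add)
  thus ?thesis using assms(3,4) by (simp only: alg_mult alg_exp_rat)
qed

definition rep :: "complex set \<Rightarrow> ((complex \<Rightarrow> complex) \<Rightarrow> complex) \<Rightarrow> bool" where
  "rep T f \<longleftrightarrow> finite T \<and> (\<exists>(M :: (complex \<Rightarrow> nat) set) (c :: (complex \<Rightarrow> nat) \<Rightarrow> rat).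
     finite M \<and> (\<forall>m\<in>M. \<forall>x. m x \<noteq> 0 \<longrightarrow> x \<in> T) \<and>
     (\<forall>\<nu>. f \<nu> = (\<Sum>m\<in>M. of_rat (c m) * (\<Prod>x\<in>T. \<nu> x ^ m x))))"

lemma rep_vanish:
  assumes "Q_alg_indep T" "rep T f" "f id = 0"
  shows "f \<nu> = 0"
proof -
  from assms(2) obtain M c where M: "finite M" "\<forall>m\<in>M. \<forall>x. m x \<noteq> 0 \<longrightarrow> x \<in> T"
    "\<And>\<nu>. f \<nu> = (\<Sum>m\<in>M. of_rat (c m) * (\<Prod>x\<in>T. \<nu> x ^ m x))"
    unfolding rep_def by blast
  have "(\<Sum>m\<in>M. of_rat (c m) * (\<Prod>x\<in>T. x ^ m x)) = 0" using assms(3) M(3)[of id] by simp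
  hence "\<forall>m\<in>M. c m = 0" using assms(1) M(1,2) unfolding Q_alg_indep_def by blast
  thus ?thesis using M(3) by simp
qed

lemma rep_const: "finite T \<Longrightarrow> rep T (\<lambda>\<nu>. of_rat r)"
  unfolding rep_def
  by (rule conjI, assumption, rule exI[of _ "{\<lambda>_. 0}"], rule exI[of _ "\<lambda>_. r"]) simp

lemma rep_var: "finite T \<Longrightarrow> t \<in> T \<Longrightarrow> rep T (\<lambda>\<nu>. \<nu> t)"
proof -
  assume fT: "finite T" and tT: "t \<in> T"
  define mt :: "complex \<Rightarrow> nat" where "mt = (\<lambda>x. if x = t then 1 else 0)"
  have "(\<Prod>x\<in>T. \<nu> x ^ mt x) = (\<Prod>x\<in>T. if x = t then \<nu> x else 1)" for \<nu>
    by (intro prod.cong) (auto simp: mt_def)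
  also have "\<dots> \<nu> = \<nu> t" for \<nu> using fT tT by (simp add: prod.delta)
  finally have e: "\<And>\<nu>. (\<Prod>x\<in>T. \<nu> x ^ mt x) = \<nu> t" .
  have s: "(\<Sum>m\<in>{mt}. of_rat 1 * (\<Prod>x\<in>T. \<nu> x ^ m x)) = \<nu> t" for \<nu>
    by (simp only: sum.insert finite.emptyI empty_iff sum.empty of_rat_1 mult_1 add_0_right e not_False_eq_True)
  have "\<forall>m\<in>{mt}. \<forall>x. m x \<noteq> 0 \<longrightarrow> x \<in> T" using tT by (simp add: mt_def)
  thus ?thesis unfolding rep_def using fT s
    by (intro conjI exI[of _ "{mt}"] exI[of _ "\<lambda>_. 1"]) (auto simp: e)
qed

lemma rep_add:
  assumes "rep T f" "rep T g"
  shows "rep T (\<lambda>\<nu>. f \<nu> + g \<nu>)"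
proof -
  from assms(1) obtain M1 c1 where M1: "finite T" "finite M1" "\<forall>m\<in>M1. \<forall>x. m x \<noteq> 0 \<longrightarrow> x \<in> T"
    "\<And>\<nu>. f \<nu> = (\<Sum>m\<in>M1. of_rat (c1 m) * (\<Prod>x\<in>T. \<nu> x ^ m x))"
    unfolding rep_def by blast
  from assms(2) obtain M2 c2 where M2: "finite M2" "\<forall>m\<in>M2. \<forall>x. m x \<noteq> 0 \<longrightarrow> x \<in> T"
    "\<And>\<nu>. g \<nu> = (\<Sum>m\<in>M2. of_rat (c2 m) * (\<Prod>x\<in>T. \<nu> x ^ m x))"
    unfolding rep_def by blast
  define c where "c m = (if m \<in> M1 then c1 m else 0) + (if m \<in> M2 then c2 m else 0)" for m
  have "f \<nu> + g \<nu> = (\<Sum>m\<in>M1 \<union> M2. of_rat (c m) * (\<Prod>x\<in>T. \<nu> x ^ m x))" for \<nu>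
  proof -
    have "(\<Sum>m\<in>M1 \<union> M2. of_rat (c m) * (\<Prod>x\<in>T. \<nu> x ^ m x)) =
      (\<Sum>m\<in>M1 \<union> M2. (if m \<in> M1 then of_rat (c1 m) * (\<Prod>x\<in>T. \<nu> x ^ m x) else 0)) +
      (\<Sum>m\<in>M1 \<union> M2. (if m \<in> M2 then of_rat (c2 m) * (\<Prod>x\<in>T. \<nu> x ^ m x) else 0))"
      unfolding sum.distrib[symmetric]
      by (intro sum.cong refl) (auto simp: c_def of_rat_add distrib_right)
    also have "\<dots> = f \<nu> + g \<nu>"
      using M1 M2 by (simp add: sum.If_cases Int_absorb1 Int_absorb2)
    finally show ?thesis by simp
  qed
  thus ?thesis unfolding rep_def using M1 M2
    by (intro conjI exI[of _ "M1 \<union> M2"] exI[of _ c]) auto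
qed

lemma rep_mult:
  assumes "rep T f" "rep T g"
  shows "rep T (\<lambda>\<nu>. f \<nu> * g \<nu>)"
proof -
  from assms(1) obtain M1 c1 where M1: "finite T" "finite M1" "\<forall>m\<in>M1. \<forall>x. m x \<noteq> 0 \<longrightarrow> x \<in> T"
    "\<And>\<nu>. f \<nu> = (\<Sum>m\<in>M1. of_rat (c1 m) * (\<Prod>x\<in>T. \<nu> x ^ m x))"
    unfolding rep_def by blast
  from assms(2) obtain M2 c2 where M2: "finite M2" "\<forall>m\<in>M2. \<forall>x. m x \<noteq> 0 \<longrightarrow> x \<in> T"
    "\<And>\<nu>. g \<nu> = (\<Sum>m\<in>M2. of_rat (c2 m) * (\<Prod>x\<in>T. \<nu> x ^ m x))"
    unfolding rep_def by blast
  define h where "h = (\<lambda>(m1::complex\<Rightarrow>nat, m2::complex\<Rightarrow>nat). \<lambda>x. m1 x + m2 x)"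
  define S where "S = M1 \<times> M2"
  define c where "c m = (\<Sum>p\<in>{p\<in>S. h p = m}. c1 (fst p) * c2 (snd p))" for m
  have fS: "finite S" using M1 M2 by (simp add: S_def)
  have "f \<nu> * g \<nu> = (\<Sum>m\<in>h ` S. of_rat (c m) * (\<Prod>x\<in>T. \<nu> x ^ m x))" for \<nu>
  proof -
    have pp: "(\<Prod>x\<in>T. \<nu> x ^ h (m1, m2) x) = (\<Prod>x\<in>T. \<nu> x ^ m1 x) * (\<Prod>x\<in>T. \<nu> x ^ m2 x)" for m1 m2
      by (simp add: h_def power_add prod.distrib)
    have "f \<nu> * g \<nu> = (\<Sum>m1\<in>M1. \<Sum>m2\<in>M2. (of_rat (c1 m1) * (\<Prod>x\<in>T. \<nu> x ^ m1 x)) * (of_rat (c2 m2) * (\<Prod>x\<in>T. \<nu> x ^ m2 x)))"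
      unfolding M1(4) M2(3) sum_product ..
    also have "\<dots> = (\<Sum>(m1,m2)\<in>M1 \<times> M2. (of_rat (c1 m1) * (\<Prod>x\<in>T. \<nu> x ^ m1 x)) * (of_rat (c2 m2) * (\<Prod>x\<in>T. \<nu> x ^ m2 x)))"
      by (rule sum.cartesian_product)
    also have "\<dots> = (\<Sum>p\<in>S. of_rat (c1 (fst p) * c2 (snd p)) * (\<Prod>x\<in>T. \<nu> x ^ h p x))"
      unfolding S_def by (intro sum.cong refl) (clarsimp simp only: pp of_rat_mult fst_conv snd_conv split: prod.splits; simp only: mult_ac)
    finally have "f \<nu> * g \<nu> = (\<Sum>p\<in>S. of_rat (c1 (fst p) * c2 (snd p)) * (\<Prod>x\<in>T. \<nu> x ^ h p x))" .
    also have "\<dots> = (\<Sum>m\<in>h ` S. \<Sum>p\<in>{p\<in>S. h p = m}. of_rat (c1 (fst p) * c2 (snd p)) * (\<Prod>x\<in>T. \<nu> x ^ h p x))"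
      by (rule sum.image_gen[OF fS])
    also have "\<dots> = (\<Sum>m\<in>h ` S. of_rat (c m) * (\<Prod>x\<in>T. \<nu> x ^ m x))"
      by (intro sum.cong refl) (simp add: c_def of_rat_sum sum_distrib_right)
    finally show ?thesis .
  qed
  moreover have "\<forall>m\<in>h ` S. \<forall>x. m x \<noteq> 0 \<longrightarrow> x \<in> T"
    using M1(3) M2(2) by (force simp: h_def S_def)
  moreover have "finite (h ` S)" using fS by simp
  ultimately show ?thesis unfolding rep_def using M1(1)
    by blast
qed

lemma rep_sum:
  assumes "finite K" "finite T" "\<And>k. k \<in> K \<Longrightarrow> rep T (h k)"
  shows "rep T (\<lambda>\<nu>. \<Sum>k\<in>K. h k \<nu>)"
  using assms
proof (induction K rule: finite_induct)
  case empty thus ?case using rep_const[of T 0] by simp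
next
  case (insert k K) thus ?case using rep_add[of T "h k" "\<lambda>\<nu>. \<Sum>k\<in>K. h k \<nu>"] by simp
qed

lemma rep_pow:
  assumes "rep T f" shows "rep T (\<lambda>\<nu>. f \<nu> ^ n)"
proof (induction n)
  case 0 thus ?case using rep_const[of T 1] assms by (simp add: rep_def)
next
  case (Suc n) thus ?case using rep_mult[OF assms Suc] by simp
qed

lemma rep_constc: "finite T \<Longrightarrow> c \<in> \<rat> \<Longrightarrow> rep T (\<lambda>\<nu>. c)"
  by (auto elim!: Rats_cases intro: rep_const)

lemma Q_alg_indep_finite: "Q_alg_indep T \<Longrightarrow> finite T"
  by (simp add: Q_alg_indep_def)

lemma hom_core:
  assumes T: "Q_alg_indep T" and P: "rep T P" and Q: "rep T Q"
    and c: "algebraic c" and rel: "P id = c * Q id"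
    and nu: "\<And>z. \<exists>\<nu>. P \<nu> = z \<and> Q \<nu> = 1"
  shows False
proof -
  obtain p where p: "\<forall>i. coeff p i \<in> \<rat>" "p \<noteq> 0" "poly p c = 0"
    using c by (auto simp: algebraic_altdef)
  define d where "d = degree p"
  define f where "f \<nu> = (\<Sum>k\<le>d. coeff p k * P \<nu> ^ k * Q \<nu> ^ (d - k))" for \<nu>
  have fT: "finite T" using T by (rule Q_alg_indep_finite)
  have rf: "rep T f" unfolding f_def
    by (intro rep_sum rep_mult rep_pow P Q rep_constc fT p(1)[rule_format]) auto
  have key: "f \<nu> = Q \<nu> ^ d * poly p z" if "P \<nu> = z * Q \<nu>" for \<nu> z
  proof -
    have "f \<nu> = (\<Sum>k\<le>d. Q \<nu> ^ d * (coeff p k * z ^ k))"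
      unfolding f_def that
      by (intro sum.cong refl) (auto simp: power_mult_distrib power_add[symmetric] algebra_simps)
    also have "\<dots> = Q \<nu> ^ d * poly p z" by (simp add: poly_altdef d_def sum_distrib_left)
    finally show ?thesis .
  qed
  have "f id = 0" using key[of id c] rel p(3) by simp
  hence f0: "f \<nu> = 0" for \<nu> using rep_vanish[OF T rf] by blast
  have "poly p z = 0" for z
  proof -
    obtain \<nu> where "P \<nu> = z" "Q \<nu> = 1" using nu by blast
    thus ?thesis using key[of \<nu> z] f0[of \<nu>] by simp
  qed
  hence "p = 0" using poly_all_0_iff_0 by blast
  with p(2) show False by simp
qed

lemma G2:
  assumes T: "Q_alg_indep T" and "u \<in> T" "w \<in> T" "u \<noteq> w" "algebraic c" "u = c * w"
  shows False
proof -
  have fT: "finite T" using T by (rule Q_alg_indep_finite)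
  show False
    by (rule hom_core[OF T rep_var[OF fT \<open>u\<in>T\<close>] rep_var[OF fT \<open>w\<in>T\<close>] \<open>algebraic c\<close>])
       (use assms in \<open>auto intro!: exI[of _ "\<lambda>t. if t = u then z else 1" for z]\<close>)
qed

lemma G3:
  assumes T: "Q_alg_indep T" and "u \<in> T" "v \<in> T" "w \<in> T" "u \<noteq> v" "u \<noteq> w" "algebraic c"
    and rel: "(u - of_rat r) * v = c * w"
  shows False
proof -
  have fT: "finite T" using T by (rule Q_alg_indep_finite)
  have rP: "rep T (\<lambda>\<nu>. (\<nu> u + - 1 * of_rat r) * \<nu> v)"
    by (intro rep_mult rep_add rep_var fT rep_const rep_constc assms) auto
  show False
    by (rule hom_core[OF T rP rep_var[OF fT \<open>w\<in>T\<close>] \<open>algebraic c\<close>])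
       (use assms in \<open>auto intro!: exI[of _ "\<lambda>t. if t = u then of_rat r + z else 1" for z]\<close>)
qed

lemma Galg:
  assumes T: "Q_alg_indep T" and "t \<in> T" shows "\<not> algebraic t"
proof
  assume a: "algebraic t"
  have fT: "finite T" using T by (rule Q_alg_indep_finite)
  show False
    by (rule hom_core[OF T rep_var[OF fT \<open>t\<in>T\<close>] rep_const[OF fT, of 1] a])
       (auto intro!: exI[of _ "\<lambda>_. z" for z])
qed

lemma schanuel_use:
  assumes "Schanuel" "Q_lin_indep n a"
  shows "\<exists>T. T \<subseteq> a ` {..<n} \<union> (\<lambda>i. exp (a i)) ` {..<n} \<and> card T = n \<and> Q_alg_indep T"
  using assms unfolding Schanuel_def trdeg_Q_ge_def by blast

lemma lin2: "Q_lin_indep 2 (\<lambda>i. [a0,a1]!i) \<longleftrightarrow>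
  (\<forall>q0 q1. of_rat q0 * a0 + of_rat q1 * a1 = 0 \<longrightarrow> q0 = 0 \<and> q1 = 0)"
  unfolding Q_lin_indep_def
proof safe
  fix q0 q1 assume H: "\<forall>q. (\<Sum>i<2. of_rat (q i) * [a0, a1] ! i) = 0 \<longrightarrow> (\<forall>i<2. q i = 0)"
    and e: "of_rat q0 * a0 + of_rat q1 * a1 = 0"
  have "\<forall>i<2. (\<lambda>i. [q0,q1]!i) i = 0" using H[rule_format, of "\<lambda>i. [q0,q1]!i"] e
    by (simp add: eval_nat_numeral)
  thus "q0 = 0" "q1 = 0" by (auto dest: spec[of _ 0] spec[of _ 1])
next
  fix q i assume H: "\<forall>q0 q1. of_rat q0 * a0 + of_rat q1 * a1 = 0 \<longrightarrow> q0 = 0 \<and> q1 = 0"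
    and e: "(\<Sum>i<2. of_rat (q i) * [a0, a1] ! i) = 0" and i: "i < (2::nat)"
  have "q 0 = 0 \<and> q 1 = 0" using H e by (simp add: eval_nat_numeral)
  thus "q i = 0" using i by (auto simp: eval_nat_numeral less_Suc_eq)
qed

lemma lin3: "Q_lin_indep 3 (\<lambda>i. [a0,a1,a2]!i) \<longleftrightarrow>
  (\<forall>q0 q1 q2. of_rat q0 * a0 + of_rat q1 * a1 + of_rat q2 * a2 = 0 \<longrightarrow> q0 = 0 \<and> q1 = 0 \<and> q2 = 0)"
  unfolding Q_lin_indep_def
proof safe
  fix q0 q1 q2 assume H: "\<forall>q. (\<Sum>i<3. of_rat (q i) * [a0, a1, a2] ! i) = 0 \<longrightarrow> (\<forall>i<3. q i = 0)"
    and e: "of_rat q0 * a0 + of_rat q1 * a1 + of_rat q2 * a2 = 0"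
  have "\<forall>i<3. (\<lambda>i. [q0,q1,q2]!i) i = 0" using H[rule_format, of "\<lambda>i. [q0,q1,q2]!i"] e
    by (simp add: eval_nat_numeral add.assoc)
  thus "q0 = 0" "q1 = 0" "q2 = 0" by (auto dest: spec[of _ 0] spec[of _ 1] spec[of _ 2])
next
  fix q i assume H: "\<forall>q0 q1 q2. of_rat q0 * a0 + of_rat q1 * a1 + of_rat q2 * a2 = 0 \<longrightarrow> q0 = 0 \<and> q1 = 0 \<and> q2 = 0"
    and e: "(\<Sum>i<3. of_rat (q i) * [a0, a1, a2] ! i) = 0" and i: "i < (3::nat)"
  have "q 0 = 0 \<and> q 1 = 0 \<and> q 2 = 0" using H e by (simp add: eval_nat_numeral add.assoc)
  thus "q i = 0" using i by (auto simp: eval_nat_numeral less_Suc_eq)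
qed

lemma lin4: "Q_lin_indep 4 (\<lambda>i. [a0,a1,a2,a3]!i) \<longleftrightarrow>
  (\<forall>q0 q1 q2 q3. of_rat q0 * a0 + of_rat q1 * a1 + of_rat q2 * a2 + of_rat q3 * a3 = 0 \<longrightarrow>
     q0 = 0 \<and> q1 = 0 \<and> q2 = 0 \<and> q3 = 0)"
  unfolding Q_lin_indep_def
proof safe
  fix q0 q1 q2 q3 assume H: "\<forall>q. (\<Sum>i<4. of_rat (q i) * [a0, a1, a2, a3] ! i) = 0 \<longrightarrow> (\<forall>i<4. q i = 0)"
    and e: "of_rat q0 * a0 + of_rat q1 * a1 + of_rat q2 * a2 + of_rat q3 * a3 = 0"
  have "\<forall>i<4. (\<lambda>i. [q0,q1,q2,q3]!i) i = 0" using H[rule_format, of "\<lambda>i. [q0,q1,q2,q3]!i"] e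
    by (simp add: eval_nat_numeral add.assoc)
  thus "q0 = 0" "q1 = 0" "q2 = 0" "q3 = 0" by (auto dest: spec[of _ 0] spec[of _ 1] spec[of _ 2] spec[of _ 3])
next
  fix q i assume H: "\<forall>q0 q1 q2 q3. of_rat q0 * a0 + of_rat q1 * a1 + of_rat q2 * a2 + of_rat q3 * a3 = 0 \<longrightarrow>
     q0 = 0 \<and> q1 = 0 \<and> q2 = 0 \<and> q3 = 0"
    and e: "(\<Sum>i<4. of_rat (q i) * [a0, a1, a2, a3] ! i) = 0" and i: "i < (4::nat)"
  have "q 0 = 0 \<and> q 1 = 0 \<and> q 2 = 0 \<and> q 3 = 0" using H e by (simp add: eval_nat_numeral add.assoc)
  thus "q i = 0" using i by (auto simp: eval_nat_numeral less_Suc_eq)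
qed

lemma sch2:
  assumes "Schanuel" "Q_lin_indep 2 (\<lambda>i. [a0,a1]!i)"
  shows "\<exists>T. T \<subseteq> {a0, a1, exp a0, exp a1} \<and> card T = 2 \<and> Q_alg_indep T"
proof -
  have e: "(\<lambda>i. [a0,a1]!i) ` {..<2} \<union> (\<lambda>i. exp ([a0,a1]!i)) ` {..<2} = {a0, a1, exp a0, exp a1}"
    by (auto simp: eval_nat_numeral lessThan_Suc)
  show ?thesis using schanuel_use[OF assms] unfolding e .
qed

lemma sch3:
  assumes "Schanuel" "Q_lin_indep 3 (\<lambda>i. [a0,a1,a2]!i)"
  shows "\<exists>T. T \<subseteq> {a0, a1, a2, exp a0, exp a1, exp a2} \<and> card T = 3 \<and> Q_alg_indep T"
proof -
  have e: "(\<lambda>i. [a0,a1,a2]!i) ` {..<3} \<union> (\<lambda>i. exp ([a0,a1,a2]!i)) ` {..<3} = {a0, a1, a2, exp a0, exp a1, exp a2}"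
    by (auto simp: eval_nat_numeral lessThan_Suc)
  show ?thesis using schanuel_use[OF assms] unfolding e .
qed

lemma sch4:
  assumes "Schanuel" "Q_lin_indep 4 (\<lambda>i. [a0,a1,a2,a3]!i)"
  shows "\<exists>T. T \<subseteq> {a0, a1, a2, a3, exp a0, exp a1, exp a2, exp a3} \<and> card T = 4 \<and> Q_alg_indep T"
proof -
  have e: "(\<lambda>i. [a0,a1,a2,a3]!i) ` {..<4} \<union> (\<lambda>i. exp ([a0,a1,a2,a3]!i)) ` {..<4} =
     {a0, a1, a2, a3, exp a0, exp a1, exp a2, exp a3}"
    by (auto simp: eval_nat_numeral lessThan_Suc)
  show ?thesis using schanuel_use[OF assms] unfolding e .
qed

lemma card_eqI:
  assumes "T \<subseteq> A" "finite A" "card A \<le> card T" shows "T = A"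
  using card_seteq[OF assms(2,1,3)] .

lemma card2_le: "card {a, b} \<le> 2" by (simp add: card_insert_if)
lemma card3_le: "card {a, b, c} \<le> 3" by (simp add: card_insert_if)
lemma card4_le: "card {a, b, c, d} \<le> 4" by (simp add: card_insert_if)

lemma GS:
  fixes l b :: complex
  assumes S: "Schanuel" and l0: "l \<noteq> 0" and el: "algebraic (exp l)" and b: "algebraic b"
    and br: "b \<notin> \<rat>"
  shows "\<not> algebraic (exp (b * l))"
proof
  assume ebl: "algebraic (exp (b * l))"
  have "Q_lin_indep 2 (\<lambda>i. [l, b * l]!i)"
    unfolding lin2
  proof (intro allI impI)
    fix q0 q1 :: rat assume "of_rat q0 * l + of_rat q1 * (b * l) = 0"
    hence "(of_rat q0 + of_rat q1 * b) * l = 0" by (simp add: algebra_simps)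
    hence e: "of_rat q0 + of_rat q1 * b = 0" using l0 by simp
    have "q1 = 0"
    proof (rule ccontr)
      assume "q1 \<noteq> 0"
      hence "b = of_rat (- q0 / q1)" using e by (simp add: of_rat_divide of_rat_minus field_simps eq_neg_iff_add_eq_0)
      with br show False by simp
    qed
    thus "q0 = 0 \<and> q1 = 0" using e by simp
  qed
  then obtain T where T: "T \<subseteq> {l, b * l, exp l, exp (b * l)}" "card T = 2" "Q_alg_indep T"
    using sch2[OF S] by blast
  have "T \<subseteq> {l, b * l}" using T(1) Galg[OF T(3)] el ebl by blast
  hence TT: "T = {l, b * l}" using T(2) card2_le by (intro card_eqI) auto
  hence "l \<noteq> b * l" using T(2) by auto
  thus False using G2[OF T(3), of "b * l" l b] TT b by auto
qed

lemma card_distinct4: "card {a,b,c,d} = 4 \<Longrightarrow> distinct [a,b,c,d]"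
  by (rule card_distinct) simp
lemma card_distinct3: "card {a,b,c} = 3 \<Longrightarrow> distinct [a,b,c]"
  by (rule card_distinct) simp

lemma caseA2:
  fixes x L \<alpha> B :: complex
  assumes S: Schanuel and eL: "exp L = \<alpha>" and ex: "exp x = B"
    and a\<alpha>: "algebraic \<alpha>" and irr: "\<alpha> \<notin> \<rat>"
    and C: "algebraic (exp (\<alpha> * x))" and D: "algebraic (exp (B * L))"
    and x0: "x \<noteq> 0" and L0: "L \<noteq> 0"
  shows False
proof -
  have \<alpha>0: "\<alpha> \<noteq> 0" using eL by auto
  have B0: "B \<noteq> 0" using ex by auto
  have nB: "\<not> algebraic B"
  proof -
    have "\<not> algebraic (exp ((1/\<alpha>) * (\<alpha> * x)))"
    proof (rule GS[OF S])
      show "\<alpha> * x \<noteq> 0" using \<alpha>0 x0 by simp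
      show "algebraic (1/\<alpha>)" using a\<alpha> by (simp add: alg_divide)
      show "1/\<alpha> \<notin> \<rat>"
      proof
        assume "1/\<alpha> \<in> \<rat>" hence "1/(1/\<alpha>) \<in> \<rat>" by (rule Rats_divide[OF Rats_1])
        with irr show False by simp
      qed
    qed (use C in auto)
    thus ?thesis using \<alpha>0 ex by simp
  qed
  have xy: "x \<noteq> \<alpha> * x"
  proof
    assume "x = \<alpha> * x" hence "\<alpha> = 1" using x0 by (metis mult_cancel_right2)
    with irr show False by simp
  qed
  have G2xy: False if T: "Q_alg_indep T" "x \<in> T" "\<alpha> * x \<in> T" for T
    using G2[OF T(1) T(3) T(2) xy[symmetric] a\<alpha>] by simp
  show False
  proof (cases "Q_lin_indep 3 (\<lambda>i. [x, \<alpha> * x, L]!i)")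
    case I3: True
    show False
    proof (cases "Q_lin_indep 4 (\<lambda>i. [x, \<alpha> * x, L, B * L]!i)")
      case I4: True
      obtain T where T: "T \<subseteq> {x, \<alpha> * x, L, B * L, exp x, exp (\<alpha> * x), exp L, exp (B * L)}"
        "card T = 4" "Q_alg_indep T" using sch4[OF S I4] by blast
      have TS: "T \<subseteq> {x, \<alpha> * x, L, B * L, B}"
        using T(1) Galg[OF T(3)] C D a\<alpha> unfolding eL ex by blast
      show False
      proof (cases "x \<in> T \<and> \<alpha> * x \<in> T")
        case True thus False using G2xy[OF T(3)] by blast
      next
        case False
        obtain z where z: "z = x \<or> z = \<alpha> * x" "T = {z, L, B * L, B}"
        proof (cases "x \<in> T")
          case False
          hence "T = {\<alpha> * x, L, B * L, B}" using TS T(2) card4_le by (intro card_eqI) auto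
          thus ?thesis using that by blast
        next
          case True
          hence "\<alpha> * x \<notin> T" using \<open>\<not> (x \<in> T \<and> \<alpha> * x \<in> T)\<close> by blast
          hence "T = {x, L, B * L, B}" using TS T(2) card4_le by (intro card_eqI) auto
          thus ?thesis using that by blast
        qed
        have dd: "distinct [z, L, B * L, B]" using T(2) z(2) by (intro card_distinct4) simp
        show False
          by (rule G3[OF T(3), of B L "B * L" 1 0]) (use z dd in auto)
      qed
    next
      case I4: False
      then obtain q0 q1 q2 q3 where q: "of_rat q0 * x + of_rat q1 * (\<alpha> * x) + of_rat q2 * L + of_rat q3 * (B * L) = 0"
        "\<not> (q0 = 0 \<and> q1 = 0 \<and> q2 = 0 \<and> q3 = 0)" unfolding lin4 by blast
      have q3: "q3 \<noteq> 0"
      proof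
        assume "q3 = 0"
        with q I3[unfolded lin3] show False by auto
      qed
      define c where "c = of_rat (- q0 / q3) + of_rat (- q1 / q3) * \<alpha>"
      have ac: "algebraic c" unfolding c_def by (intro alg_add alg_mult alg_rat a\<alpha>)
      have rel: "(B - of_rat (- q2 / q3)) * L = c * x"
        using q(1) q3 unfolding c_def
        by (simp add: of_rat_divide of_rat_minus field_simps eq_neg_iff_add_eq_0)
      obtain T where T: "T \<subseteq> {x, \<alpha> * x, L, exp x, exp (\<alpha> * x), exp L}"
        "card T = 3" "Q_alg_indep T" using sch3[OF S I3] by blast
      have TS: "T \<subseteq> {x, \<alpha> * x, L, B}"
        using T(1) Galg[OF T(3)] C a\<alpha> unfolding eL ex by blast
      show False
      proof (cases "x \<in> T \<and> \<alpha> * x \<in> T")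
        case True thus False using G2xy[OF T(3)] by blast
      next
        case False
        show False
        proof (cases "x \<in> T")
          case True
          hence "T = {x, L, B}" using False TS T(2) card3_le by (intro card_eqI) auto
          hence dd: "distinct [x, L, B]" using T(2) by (intro card_distinct3) simp
          show False by (rule G3[OF T(3), of B L x c]) (use dd ac rel \<open>T = {x, L, B}\<close> in auto)
        next
          case xT: False
          hence TT: "T = {\<alpha> * x, L, B}" using TS T(2) card3_le by (intro card_eqI) auto
          hence dd: "distinct [\<alpha> * x, L, B]" using T(2) by (intro card_distinct3) simp
          have rel': "(B - of_rat (- q2 / q3)) * L = (c / \<alpha>) * (\<alpha> * x)" using rel \<alpha>0 by simp
          show False by (rule G3[OF T(3), of B L "\<alpha> * x" "c / \<alpha>"])
                        (use dd ac rel' TT a\<alpha> alg_divide in auto)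
        qed
      qed
    qed
  next
    case I3: False
    then obtain q0 q1 q2 where q: "of_rat q0 * x + of_rat q1 * (\<alpha> * x) + of_rat q2 * L = 0"
      "\<not> (q0 = 0 \<and> q1 = 0 \<and> q2 = 0)" unfolding lin3 by blast
    have q0: "q0 = 0"
    proof (rule ccontr)
      assume "q0 \<noteq> 0"
      from exp_rel3[OF q(1) this C] a\<alpha> eL ex nB show False by simp
    qed
    have q2: "q2 \<noteq> 0"
    proof
      assume "q2 = 0"
      with q q0 \<alpha>0 x0 show False by simp
    qed
    define r where "r = - q1 / q2"
    have Lr: "L = of_rat r * (\<alpha> * x)"
      using q(1) q0 q2 unfolding r_def
      by (simp add: of_rat_divide of_rat_minus field_simps eq_neg_iff_add_eq_0)
    have r0: "r \<noteq> 0" using Lr L0 by auto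
    show False
    proof (cases "Q_lin_indep 3 (\<lambda>i. [x, \<alpha> * x, B * L]!i)")
      case J3: True
      obtain T where T: "T \<subseteq> {x, \<alpha> * x, B * L, exp x, exp (\<alpha> * x), exp (B * L)}"
        "card T = 3" "Q_alg_indep T" using sch3[OF S J3] by blast
      have TS: "T \<subseteq> {x, \<alpha> * x, B * L, B}"
        using T(1) Galg[OF T(3)] C D unfolding ex by blast
      show False
      proof (cases "x \<in> T \<and> \<alpha> * x \<in> T")
        case True thus False using G2xy[OF T(3)] by blast
      next
        case False
        show False
        proof (cases "x \<in> T")
          case True
          hence TT: "T = {x, B * L, B}" using False TS T(2) card3_le by (intro card_eqI) auto
          hence dd: "distinct [x, B * L, B]" using T(2) by (intro card_distinct3) simp
          have rel: "(B - of_rat 0) * x = (1 / (of_rat r * \<alpha>)) * (B * L)"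
            using Lr r0 \<alpha>0 by (simp add: field_simps)
          show False by (rule G3[OF T(3), of B x "B * L" _ 0, OF _ _ _ _ _ _ rel])
                        (use dd TT a\<alpha> in \<open>auto intro!: alg_divide alg_mult alg_rat\<close>)
        next
          case xT: False
          hence TT: "T = {\<alpha> * x, B * L, B}" using TS T(2) card3_le by (intro card_eqI) auto
          hence dd: "distinct [\<alpha> * x, B * L, B]" using T(2) by (intro card_distinct3) simp
          have rel: "(B - of_rat 0) * (\<alpha> * x) = (1 / of_rat r) * (B * L)"
            using Lr r0 by (simp add: field_simps)
          show False by (rule G3[OF T(3), of B "\<alpha> * x" "B * L" _ 0, OF _ _ _ _ _ _ rel])
                        (use dd TT in \<open>auto intro!: alg_divide alg_rat\<close>)
        qed
      qed
    next
      case J3: False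
      then obtain p0 p1 p2 where p: "of_rat p0 * x + of_rat p1 * (\<alpha> * x) + of_rat p2 * (B * L) = 0"
        "\<not> (p0 = 0 \<and> p1 = 0 \<and> p2 = 0)" unfolding lin3 by blast
      have p2: "p2 \<noteq> 0"
      proof
        assume p20: "p2 = 0"
        hence "(of_rat p0 + of_rat p1 * \<alpha>) * x = 0" using p(1) by (simp add: algebra_simps)
        hence e: "of_rat p0 + of_rat p1 * \<alpha> = 0" using x0 by simp
        have "p1 = 0"
        proof (rule ccontr)
          assume "p1 \<noteq> 0"
          hence "\<alpha> = of_rat (- p0 / p1)" using e
            by (simp add: of_rat_divide of_rat_minus field_simps eq_neg_iff_add_eq_0)
          with irr show False by simp
        qed
        thus False using e p(2) p20 by simp
      qed
      have "(B * (of_rat r * \<alpha> * of_rat p2) + (of_rat p0 + of_rat p1 * \<alpha>)) * x = 0"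
        using p(1) Lr by (simp add: algebra_simps)
      hence "B * (of_rat r * \<alpha> * of_rat p2) + (of_rat p0 + of_rat p1 * \<alpha>) = 0" using x0 by simp
      hence "B = - (of_rat p0 + of_rat p1 * \<alpha>) / (of_rat r * \<alpha> * of_rat p2)"
        using r0 \<alpha>0 p2 by (simp add: field_simps eq_neg_iff_add_eq_0)
      moreover have "algebraic (- (of_rat p0 + of_rat p1 * \<alpha>) / (of_rat r * \<alpha> * of_rat p2))"
        using a\<alpha> by (intro alg_divide alg_add alg_mult alg_rat algebraic_minus) auto
      ultimately show False using nB by simp
    qed
  qed
qed

lemma caseB2:
  fixes x L \<alpha> B :: complex
  assumes S: Schanuel and eL: "exp L = \<alpha>" and ex: "exp x = B"
    and n\<alpha>: "\<not> algebraic \<alpha>" and aB: "algebraic B" and irr: "B \<notin> \<rat>"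
    and C: "algebraic (exp (\<alpha> * x))" and D: "algebraic (exp (B * L))"
    and x0: "x \<noteq> 0" and L0: "L \<noteq> 0"
  shows False
proof -
  have \<alpha>0: "\<alpha> \<noteq> 0" using eL by auto
  have B0: "B \<noteq> 0" using ex by auto
  have LBL: "L \<noteq> B * L"
  proof
    assume "L = B * L" hence "B = 1" using L0 by (metis mult_cancel_right2)
    with irr show False by simp
  qed
  have G2LB: False if T: "Q_alg_indep T" "L \<in> T" "B * L \<in> T" for T
    using G2[OF T(1) T(3) T(2) LBL[symmetric] aB] by simp
  show False
  proof (cases "Q_lin_indep 4 (\<lambda>i. [x, \<alpha> * x, L, B * L]!i)")
    case K4: True
    obtain T where T: "T \<subseteq> {x, \<alpha> * x, L, B * L, exp x, exp (\<alpha> * x), exp L, exp (B * L)}"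
      "card T = 4" "Q_alg_indep T" using sch4[OF S K4] by blast
    have TS: "T \<subseteq> {x, \<alpha> * x, L, B * L, \<alpha>}"
      using T(1) Galg[OF T(3)] C D aB unfolding eL ex by blast
    show False
    proof (cases "L \<in> T \<and> B * L \<in> T")
      case True thus False using G2LB[OF T(3)] by blast
    next
      case False
      obtain z where z: "z = L \<or> z = B * L" "T = {x, \<alpha> * x, z, \<alpha>}"
      proof (cases "L \<in> T")
        case False
        hence "T = {x, \<alpha> * x, B * L, \<alpha>}" using TS T(2) card4_le by (intro card_eqI) auto
        thus ?thesis using that by blast
      next
        case True
        hence "B * L \<notin> T" using \<open>\<not> (L \<in> T \<and> B * L \<in> T)\<close> by blast
        hence "T = {x, \<alpha> * x, L, \<alpha>}" using TS T(2) card4_le by (intro card_eqI) auto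
        thus ?thesis using that by blast
      qed
      have dd: "distinct [x, \<alpha> * x, z, \<alpha>]" using T(2) z(2) by (intro card_distinct4) simp
      show False
        by (rule G3[OF T(3), of \<alpha> x "\<alpha> * x" 1 0]) (use z dd in auto)
    qed
  next
    case K4: False
    then obtain q0 q1 q2 q3 where q: "of_rat q0 * x + of_rat q1 * (\<alpha> * x) + of_rat q2 * L + of_rat q3 * (B * L) = 0"
      "\<not> (q0 = 0 \<and> q1 = 0 \<and> q2 = 0 \<and> q3 = 0)" unfolding lin4 by blast
    show False
    proof (cases "Q_lin_indep 3 (\<lambda>i. [x, L, B * L]!i)")
      case K3: True
      have q1: "q1 \<noteq> 0"
      proof
        assume "q1 = 0"
        with q K3[unfolded lin3] show False by auto
      qed
      define c where "c = of_rat (- q2 / q1) + of_rat (- q3 / q1) * B"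
      have ac: "algebraic c" unfolding c_def by (intro alg_add alg_mult alg_rat aB)
      have rel: "(\<alpha> - of_rat (- q0 / q1)) * x = c * L"
        using q(1) q1 unfolding c_def
        by (simp add: of_rat_divide of_rat_minus field_simps eq_neg_iff_add_eq_0)
      obtain T where T: "T \<subseteq> {x, L, B * L, exp x, exp L, exp (B * L)}"
        "card T = 3" "Q_alg_indep T" using sch3[OF S K3] by blast
      have TS: "T \<subseteq> {x, L, B * L, \<alpha>}"
        using T(1) Galg[OF T(3)] D aB unfolding eL ex by blast
      show False
      proof (cases "L \<in> T \<and> B * L \<in> T")
        case True thus False using G2LB[OF T(3)] by blast
      next
        case False
        show False
        proof (cases "L \<in> T")
          case True
          hence TT: "T = {x, L, \<alpha>}" using False TS T(2) card3_le by (intro card_eqI) auto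
          hence dd: "distinct [x, L, \<alpha>]" using T(2) by (intro card_distinct3) simp
          show False by (rule G3[OF T(3), of \<alpha> x L c]) (use dd ac rel TT in auto)
        next
          case LT: False
          hence TT: "T = {x, B * L, \<alpha>}" using TS T(2) card3_le by (intro card_eqI) auto
          hence dd: "distinct [x, B * L, \<alpha>]" using T(2) by (intro card_distinct3) simp
          have rel': "(\<alpha> - of_rat (- q0 / q1)) * x = (c / B) * (B * L)" using rel B0 by simp
          show False by (rule G3[OF T(3), of \<alpha> x "B * L" "c / B"])
                        (use dd ac rel' TT aB alg_divide in auto)
        qed
      qed
    next
      case K3: False
      then obtain p0 p1 p2 where p: "of_rat p0 * x + of_rat p1 * L + of_rat p2 * (B * L) = 0"
        "\<not> (p0 = 0 \<and> p1 = 0 \<and> p2 = 0)" unfolding lin3 by blast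
      have p1: "p1 = 0"
      proof (rule ccontr)
        assume "p1 \<noteq> 0"
        moreover have "of_rat p1 * L + of_rat p0 * x + of_rat p2 * (B * L) = 0"
          using p(1) by (simp add: algebra_simps)
        ultimately have "algebraic (exp L)" using exp_rel3[of p1 L p0 x p2 "B * L"] aB D ex by simp
        with n\<alpha> eL show False by simp
      qed
      have p0: "p0 \<noteq> 0"
      proof
        assume "p0 = 0"
        with p p1 B0 L0 show False by simp
      qed
      define s where "s = - p2 / p0"
      have xs: "x = of_rat s * (B * L)"
        using p(1) p0 p1 unfolding s_def
        by (simp add: of_rat_divide of_rat_minus field_simps eq_neg_iff_add_eq_0)
      have s0: "s \<noteq> 0" using xs x0 by auto
      show False
      proof (cases "Q_lin_indep 3 (\<lambda>i. [L, B * L, \<alpha> * x]!i)")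
        case K3': True
        obtain T where T: "T \<subseteq> {L, B * L, \<alpha> * x, exp L, exp (B * L), exp (\<alpha> * x)}"
          "card T = 3" "Q_alg_indep T" using sch3[OF S K3'] by blast
        have TS: "T \<subseteq> {L, B * L, \<alpha> * x, \<alpha>}"
          using T(1) Galg[OF T(3)] C D unfolding eL by blast
        show False
        proof (cases "L \<in> T \<and> B * L \<in> T")
          case True thus False using G2LB[OF T(3)] by blast
        next
          case False
          show False
          proof (cases "L \<in> T")
            case True
            hence TT: "T = {L, \<alpha> * x, \<alpha>}" using False TS T(2) card3_le by (intro card_eqI) auto
            hence dd: "distinct [L, \<alpha> * x, \<alpha>]" using T(2) by (intro card_distinct3) simp
            have rel: "(\<alpha> - of_rat 0) * L = (1 / (of_rat s * B)) * (\<alpha> * x)"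
              using xs s0 B0 by (simp add: field_simps)
            show False by (rule G3[OF T(3), of \<alpha> L "\<alpha> * x" _ 0, OF _ _ _ _ _ _ rel])
                          (use dd TT aB in \<open>auto intro!: alg_divide alg_mult alg_rat\<close>)
          next
            case LT: False
            hence TT: "T = {B * L, \<alpha> * x, \<alpha>}" using TS T(2) card3_le by (intro card_eqI) auto
            hence dd: "distinct [B * L, \<alpha> * x, \<alpha>]" using T(2) by (intro card_distinct3) simp
            have rel: "(\<alpha> - of_rat 0) * (B * L) = (1 / of_rat s) * (\<alpha> * x)"
              using xs s0 by (simp add: field_simps)
            show False by (rule G3[OF T(3), of \<alpha> "B * L" "\<alpha> * x" _ 0, OF _ _ _ _ _ _ rel])
                          (use dd TT in \<open>auto intro!: alg_divide alg_rat\<close>)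
          qed
        qed
      next
        case K3': False
        then obtain t0 t1 t2 where t: "of_rat t0 * L + of_rat t1 * (B * L) + of_rat t2 * (\<alpha> * x) = 0"
          "\<not> (t0 = 0 \<and> t1 = 0 \<and> t2 = 0)" unfolding lin3 by blast
        have t2: "t2 \<noteq> 0"
        proof
          assume t20: "t2 = 0"
          hence "(of_rat t0 + of_rat t1 * B) * L = 0" using t(1) by (simp add: algebra_simps)
          hence e: "of_rat t0 + of_rat t1 * B = 0" using L0 by simp
          have "t1 = 0"
          proof (rule ccontr)
            assume "t1 \<noteq> 0"
            hence "B = of_rat (- t0 / t1)" using e
              by (simp add: of_rat_divide of_rat_minus field_simps eq_neg_iff_add_eq_0)
            with irr show False by simp
          qed
          thus False using e t(2) t20 by simp
        qed
        have "(\<alpha> * (of_rat t2 * of_rat s * B) + (of_rat t0 + of_rat t1 * B)) * L = 0"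
          using t(1) xs by (simp add: algebra_simps)
        hence "\<alpha> * (of_rat t2 * of_rat s * B) + (of_rat t0 + of_rat t1 * B) = 0" using L0 by simp
        hence "\<alpha> = - (of_rat t0 + of_rat t1 * B) / (of_rat t2 * of_rat s * B)"
          using s0 B0 t2 by (simp add: field_simps eq_neg_iff_add_eq_0)
        moreover have "algebraic (- (of_rat t0 + of_rat t1 * B) / (of_rat t2 * of_rat s * B))"
          using aB by (intro alg_divide alg_add alg_mult alg_rat algebraic_minus) auto
        ultimately show False using n\<alpha> by simp
      qed
    qed
  qed
qed

lemma caseA1:
  fixes x L \<alpha> B :: complex
  assumes S: Schanuel and eL: "exp L = \<alpha>" and ex: "exp x = B"
    and r: "\<alpha> \<in> \<rat>" and irr: "B \<notin> \<rat>"
    and C: "algebraic (exp (\<alpha> * x))" and D: "algebraic (exp (B * L))" and L0: "L \<noteq> 0"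
  shows False
proof -
  obtain \<rho> where \<rho>: "\<alpha> = of_rat \<rho>" using r by (auto elim: Rats_cases)
  have "\<rho> \<noteq> 0" using eL \<rho> by auto
  moreover have "of_rat \<rho> * x + of_rat (-1) * (\<alpha> * x) + of_rat 0 * 0 = 0" using \<rho> by simp
  ultimately have aB: "algebraic B" using exp_rel3[of \<rho> x "-1" "\<alpha> * x" 0 0] C ex by simp
  have "\<not> algebraic (exp (B * L))"
    by (rule GS[OF S L0]) (use eL \<rho> aB irr alg_rat in auto)
  with D show False by simp
qed

lemma caseB1:
  fixes x L \<alpha> B :: complex
  assumes eL: "exp L = \<alpha>" and ex: "exp x = B" and n\<alpha>: "\<not> algebraic \<alpha>"
    and r: "B \<in> \<rat>" and D: "algebraic (exp (B * L))"
  shows False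
proof -
  obtain \<rho> where \<rho>: "B = of_rat \<rho>" using r by (auto elim: Rats_cases)
  have "\<rho> \<noteq> 0" using ex \<rho> by auto
  moreover have "of_rat \<rho> * L + of_rat (-1) * (B * L) + of_rat 0 * 0 = 0" using \<rho> by simp
  ultimately have "algebraic (exp L)" using exp_rel3[of \<rho> L "-1" "B * L" 0 0] D by simp
  with eL n\<alpha> show False by simp
qed

theorem mainTheorem3:
  fixes \<alpha> \<beta> \<gamma> log\<alpha> log\<beta> :: complex
  assumes S: "Schanuel"
    and nz: "\<alpha> \<noteq> 0" "\<beta> \<noteq> 0" "\<gamma> \<noteq> 0"
    and log\<alpha>: "exp log\<alpha> = \<alpha>" and log\<beta>: "exp log\<beta> = \<beta>"
    and a1: "\<alpha> \<noteq> 1" and bg1: "exp (\<gamma> * log\<beta>) \<noteq> 1"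
    and irr: "\<alpha> \<notin> \<rat> \<or> exp (\<gamma> * log\<beta>) \<notin> \<rat>"
    and alg: "algebraic \<alpha> \<or> algebraic (exp (\<gamma> * log\<beta>))"
    and alg_bga: "algebraic (exp (\<gamma> * \<alpha> * log\<beta>))"
  shows "\<not> algebraic (exp (exp (\<gamma> * log\<beta>) * log\<alpha>))"
proof
  assume D: "algebraic (exp (exp (\<gamma> * log\<beta>) * log\<alpha>))"
  define x where "x = \<gamma> * log\<beta>"
  define B where "B = exp x"
  have ex: "exp x = B" by (simp add: B_def)
  have C: "algebraic (exp (\<alpha> * x))" using alg_bga by (simp add: x_def mult_ac)
  have D': "algebraic (exp (B * log\<alpha>))" using D by (simp add: B_def x_def)
  have x0: "x \<noteq> 0" using bg1 by (auto simp: x_def)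
  have L0: "log\<alpha> \<noteq> 0" using a1 log\<alpha> by auto
  have irr': "\<alpha> \<notin> \<rat> \<or> B \<notin> \<rat>" using irr by (simp add: B_def x_def)
  have alg': "algebraic \<alpha> \<or> algebraic B" using alg by (simp add: B_def x_def)
  show False
  proof (cases "algebraic \<alpha>")
    case True
    show False
    proof (cases "\<alpha> \<in> \<rat>")
      case True
      thus False using caseA1[OF S log\<alpha> ex True _ C D' L0] irr' by blast
    next
      case False
      thus False using caseA2[OF S log\<alpha> ex \<open>algebraic \<alpha>\<close> False C D' x0 L0] by blast
    qed
  next
    case False
    hence aB: "algebraic B" using alg' by blast
    show False
    proof (cases "B \<in> \<rat>")
      case True
      thus False using caseB1[OF log\<alpha> ex \<open>\<not> algebraic \<alpha>\<close> True D'] by blast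
    next
      case nr: False
      thus False using caseB2[OF S log\<alpha> ex \<open>\<not> algebraic \<alpha>\<close> aB nr C D' x0 L0] by blast
    qed
  qed
qed

end
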